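(* Let $A\in\mathbb{R}^{n\times n}$ be symmetric. Let $V_N=[v_1,\ldots,v_N]\in\mathbb{R}^{n\times M}$, where each block vector $v_j$ has $n$ rows, and let $T_N\in\mathbb{R}^{M\times M}$ be a symmetric block tridiagonal matrix (with diagonal blocks $\alpha_j$, subdiagonal blocks $\beta_{j}$ and superdiagonal blocks $\beta_j^T$) such that the perturbed block Lanczos recurrence \[ AV_N=V_NT_N+\left[\Delta v_1,\ldots,\Delta v_{k-1},\Delta\widetilde v_k,\ldots,\Delta\widetilde v_N\right] \] holds (i.e. the recurrence terminates with $\beta_{N+1}=0$), where each perturbation block $\Delta v_j$, $\Delta \widetilde v_j$ has the same size as $v_j$, and \[ \max\left(\|\Delta v_1\|,\ldots,\|\Delta v_{k-1}\|,\|\Delta\widetilde v_k\|,\ldots,\|\Delta\widetilde v_N\|\right)\le\epsilon_2\|A\| \] for some $\epsilon_2>0$. Let $T_N=S_N\Theta_NS_N^T$ be a spectral decomposition with $S_N^TS_N=I$, $S_N=[s_1^{(N)},\ldots,s_M^{(N)}]$, $\Theta_N=\mathrm{diag}(\theta_1^{(N)},\ldots,\theta_M^{(N)})$, and define the Ritz vectors $z_i^{(N)}=V_Ns_i^{(N)}$. Suppose $\epsilon_1>0$ (independent of $i,j$) is such that for every Ritz pair $(\theta_i^{(N)},z_i^{(N)})$ with $\|z_i^{(N)}\|<0.5$ there exists a Ritz pair $(\theta_j^{(N)},z_j^{(N)})$ with \[ \|z_j^{(N)}\|\ge 0.5\quad\text{and}\quad|\theta_i^{(N)}-\theta_j^{(N)}|\le\epsilon_1\|A\|.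 \] Then each eigenvalue of $T_N$ lies within $3\max\left(\sqrt{N}\epsilon_2,\epsilon_1\right)\|A\|$ of an eigenvalue of $A$.
   Context: All norms are spectral (2-)norms. A "block vector" is an $n\times p_j$ matrix; $I_p$ and $0_p$ denote the $p\times p$ identity and zero matrices. *)

theory Defs
  imports "Jordan_Normal_Form.Char_Poly"
begin

definition vnorm :: "real vec \<Rightarrow> real" where
  "vnorm v = sqrt (\<Sum>i<dim_vec v. (v $ i)^2)"

definition spec_norm :: "real mat \<Rightarrow> real" where
  "spec_norm B = Sup {vnorm (B *\<^sub>v x) | x. x \<in> carrier_vec (dim_col B) \<and> vnorm x \<le> 1}"

(* column offset of block j, block sizes p 0, p 1, ... *)
definition blk_off :: "(nat \<Rightarrow> nat) \<Rightarrow> nat \<Rightarrow> nat" where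
  "blk_off p j = (\<Sum>l<j. p l)"

definition blk_idx :: "(nat \<Rightarrow> nat) \<Rightarrow> nat \<Rightarrow> nat" where
  "blk_idx p c = (LEAST j. c < blk_off p (Suc j))"

(* horizontal concatenation [D 0, ..., D (N-1)] of n x p_j blocks *)
definition blk_concat :: "nat \<Rightarrow> (nat \<Rightarrow> nat) \<Rightarrow> nat \<Rightarrow> (nat \<Rightarrow> real mat) \<Rightarrow> real mat" where
  "blk_concat n p N D = mat n (blk_off p N)
     (\<lambda>(r, c). D (blk_idx p c) $$ (r, c - blk_off p (blk_idx p c)))"

definition block_tridiag :: "(nat \<Rightarrow> nat) \<Rightarrow> nat \<Rightarrow> real mat \<Rightarrow> bool" where
  "block_tridiag p N T \<longleftrightarrow>
     (\<forall>r < blk_off p N. \<forall>c < blk_off p N.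
        blk_idx p c + 1 < blk_idx p r \<or> blk_idx p r + 1 < blk_idx p c \<longrightarrow> T $$ (r, c) = 0)"

end

theory Submission
  imports Defs "HOL-Analysis.Function_Topology" "HOL-Analysis.L2_Norm"
begin

lemma vnorm_L2: "vnorm v = L2_set (\<lambda>i. v $ i) {..<dim_vec v}"
  unfolding vnorm_def L2_set_def by simp

lemma vnorm_nonneg[simp]: "0 \<le> vnorm v"
  unfolding vnorm_L2 by simp

lemma vnorm_sq: "(vnorm v)^2 = v \<bullet> v"
  unfolding vnorm_def scalar_prod_def
  by (simp add: sum_nonneg power2_eq_square atLeast0LessThan)

lemma vnorm_eq_0: assumes "v \<in> carrier_vec n" shows "vnorm v = 0 \<longleftrightarrow> v = 0\<^sub>v n"
proof -
  have "vnorm v = 0 \<longleftrightarrow> (\<forall>i\<in>{..<n}. v $ i = 0)"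
    unfolding vnorm_L2 using assms by (simp add: L2_set_eq_0_iff)
  also have "\<dots> \<longleftrightarrow> v = 0\<^sub>v n" using assms by (auto simp: vec_eq_iff)
  finally show ?thesis .
qed

lemma vnorm_smult: "vnorm (a \<cdot>\<^sub>v v) = \<bar>a\<bar> * vnorm v"
proof -
  have "(\<Sum>i<dim_vec v. ((a \<cdot>\<^sub>v v) $ i)^2) = a^2 * (\<Sum>i<dim_vec v. (v $ i)^2)"
    by (simp add: sum_distrib_left power_mult_distrib)
  then show ?thesis unfolding vnorm_def by (simp add: real_sqrt_mult)
qed

lemma vnorm_add: assumes "dim_vec u = dim_vec v" shows "vnorm (u + v) \<le> vnorm u + vnorm v"
proof -
  have "L2_set (\<lambda>i. (u+v) $ i) {..<dim_vec v} = L2_set (\<lambda>i. u $ i + v $ i) {..<dim_vec v}"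
    using assms by (intro L2_set_cong) auto
  then show ?thesis unfolding vnorm_L2 using assms L2_set_triangle_ineq[of "\<lambda>i. u $ i" "\<lambda>i. v $ i"] by simp
qed

lemma vnorm_minus: assumes "dim_vec u = dim_vec v" shows "vnorm (u - v) = vnorm (v - u)"
  unfolding vnorm_def using assms by (intro arg_cong[where f=sqrt] sum.cong) (auto simp: power2_commute)

lemma vnorm_le_sum_abs: "vnorm v \<le> (\<Sum>i<dim_vec v. \<bar>v $ i\<bar>)"
  unfolding vnorm_L2 by (rule L2_set_le_sum_abs)

lemma abs_le_vnorm: assumes "i < dim_vec v" shows "\<bar>v $ i\<bar> \<le> vnorm v"
proof -
  have "(v$i)^2 \<le> (\<Sum>j<dim_vec v. (v$j)^2)" by (rule member_le_sum) (use assms in auto)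
  then show ?thesis unfolding vnorm_def by (metis real_sqrt_abs real_sqrt_le_mono)
qed

lemma mat_vec_bound:
  assumes x: "x \<in> carrier_vec (dim_col B)" "vnorm x \<le> 1"
  shows "vnorm (B *\<^sub>v x) \<le> (\<Sum>r<dim_row B. \<Sum>c<dim_col B. \<bar>B $$ (r,c)\<bar>)"
proof -
  have "vnorm (B *\<^sub>v x) \<le> (\<Sum>r<dim_row B. \<bar>(B *\<^sub>v x) $ r\<bar>)"
    using vnorm_le_sum_abs[of "B *\<^sub>v x"] by simp
  also have "\<dots> \<le> (\<Sum>r<dim_row B. \<Sum>c<dim_col B. \<bar>B $$ (r,c)\<bar>)"
  proof (rule sum_mono)
    fix r assume r: "r \<in> {..<dim_row B}"
    have "\<bar>(B *\<^sub>v x) $ r\<bar> = \<bar>\<Sum>c<dim_col B. B $$ (r,c) * x $ c\<bar>"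
      using r x by (simp add: scalar_prod_def atLeast0LessThan)
    also have "\<dots> \<le> (\<Sum>c<dim_col B. \<bar>B $$ (r,c) * x $ c\<bar>)" by (rule sum_abs)
    also have "\<dots> \<le> (\<Sum>c<dim_col B. \<bar>B $$ (r,c)\<bar>)"
    proof (rule sum_mono)
      fix c assume c: "c \<in> {..<dim_col B}"
      have "\<bar>x $ c\<bar> \<le> 1" using abs_le_vnorm[of c x] c x by auto
      then show "\<bar>B $$ (r,c) * x $ c\<bar> \<le> \<bar>B $$ (r,c)\<bar>"
        by (simp add: abs_mult mult_left_le)
    qed
    finally show "\<bar>(B *\<^sub>v x) $ r\<bar> \<le> (\<Sum>c<dim_col B. \<bar>B $$ (r,c)\<bar>)" .
  qed
  finally show ?thesis .
qed

lemma spec_norm_bdd: "bdd_above {vnorm (B *\<^sub>v x) | x. x \<in> carrier_vec (dim_col B) \<and> vnorm x \<le> 1}"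
  using mat_vec_bound[of _ B] unfolding bdd_above_def by blast

lemma spec_norm_upper: "x \<in> carrier_vec (dim_col B) \<Longrightarrow> vnorm x \<le> 1 \<Longrightarrow> vnorm (B *\<^sub>v x) \<le> spec_norm B"
  unfolding spec_norm_def by (rule cSup_upper[OF _ spec_norm_bdd]) blast

lemma spec_norm_nonneg: "0 \<le> spec_norm B"
proof -
  have "vnorm (0\<^sub>v (dim_col B)) = 0" using vnorm_eq_0[of "0\<^sub>v (dim_col B)" "dim_col B"] by simp
  then have "vnorm (B *\<^sub>v 0\<^sub>v (dim_col B)) \<le> spec_norm B"
    by (intro spec_norm_upper) auto
  then show ?thesis using vnorm_nonneg order_trans by blast
qed

lemma vnorm_zero[simp]: "vnorm (0\<^sub>v k) = 0"
  by (simp add: vnorm_def)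

lemma mult_mat_vec_zero: "B *\<^sub>v 0\<^sub>v (dim_col B) = 0\<^sub>v (dim_row B)"
  by (intro eq_vecI) (auto simp: scalar_prod_def)

lemma spec_norm_bound:
  assumes x: "x \<in> carrier_vec (dim_col B)"
  shows "vnorm (B *\<^sub>v x) \<le> spec_norm B * vnorm x"
proof (cases "x = 0\<^sub>v (dim_col B)")
  case True
  then have "vnorm (B *\<^sub>v x) = 0" by (simp add: mult_mat_vec_zero)
  moreover have "0 \<le> spec_norm B * vnorm x" using spec_norm_nonneg[of B] vnorm_nonneg[of x]
    by (rule mult_nonneg_nonneg)
  ultimately show ?thesis by linarith
next
  case False
  have c: "vnorm x > 0" using False vnorm_eq_0[OF x] vnorm_nonneg[of x] by linarith
  have y: "(1 / vnorm x) \<cdot>\<^sub>v x \<in> carrier_vec (dim_col B)" using x by simp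
  have ny: "vnorm ((1 / vnorm x) \<cdot>\<^sub>v x) = 1" using c by (simp add: vnorm_smult)
  have B: "B \<in> carrier_mat (dim_row B) (dim_col B)" by (rule carrier_mat_triv)
  have "B *\<^sub>v ((1 / vnorm x) \<cdot>\<^sub>v x) = (1 / vnorm x) \<cdot>\<^sub>v (B *\<^sub>v x)"
    by (rule mult_mat_vec[OF B x])
  then have e: "vnorm (B *\<^sub>v ((1 / vnorm x) \<cdot>\<^sub>v x)) = (1 / vnorm x) * vnorm (B *\<^sub>v x)"
    using c by (simp add: vnorm_smult)
  have le: "vnorm (B *\<^sub>v ((1 / vnorm x) \<cdot>\<^sub>v x)) \<le> spec_norm B" using spec_norm_upper[OF y] ny by simp
  have "vnorm (B *\<^sub>v x) / vnorm x \<le> spec_norm B" using e le c by simp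
  then show ?thesis using c by (simp add: pos_divide_le_eq)
qed

lemma vnorm_sq_sum: "(vnorm v)^2 = (\<Sum>i<dim_vec v. (v $ i)^2)"
  unfolding vnorm_def by (simp add: sum_nonneg)

definition LL :: "real mat \<Rightarrow> real \<Rightarrow> real vec \<Rightarrow> real vec" where
  "LL A t w = A *\<^sub>v w - t \<cdot>\<^sub>v w"

lemma LL_index: assumes "A \<in> carrier_mat n n" "r < n" "w \<in> carrier_vec n"
  shows "LL A t w $ r = (\<Sum>c<n. A $$ (r,c) * w $ c) - t * w $ r"
  using assms unfolding LL_def by (simp add: scalar_prod_def atLeast0LessThan row_def)

lemma LL_carrier[simp]: "A \<in> carrier_mat n n \<Longrightarrow> w \<in> carrier_vec n \<Longrightarrow> LL A t w \<in> carrier_vec n"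
  unfolding LL_def by simp

lemma compact_cube: "compact (Pi UNIV (\<lambda>_::nat. {-1..1::real}))"
proof -
  have "compactin (product_topology (\<lambda>_::nat. euclidean) UNIV) (PiE UNIV (\<lambda>_. {-1..1::real}))"
    by (subst compactin_PiE) simp
  then show ?thesis by (simp add: euclidean_product_topology PiE_UNIV_domain)
qed

lemma coord_cont: "continuous_on UNIV (\<lambda>g::nat\<Rightarrow>real. g i)" by simp

lemma min_exists:
  assumes A: "A \<in> carrier_mat n n" and n: "n > 0"
  shows "\<exists>x0\<in>carrier_vec n. vnorm x0 = 1 \<and>
     (\<forall>x\<in>carrier_vec n. vnorm x = 1 \<longrightarrow> vnorm (LL A t x0) \<le> vnorm (LL A t x))"
proof -
  define F where "F = (\<lambda>g::nat\<Rightarrow>real. (\<Sum>r<n. ((\<Sum>c<n. A $$ (r,c) * g c) - t * g r)^2))"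
  define K where "K = Pi UNIV (\<lambda>_::nat. {-1..1::real}) \<inter> {g. (\<Sum>i<n. (g i)^2) = 1}"
  have Fc: "continuous_on UNIV F" unfolding F_def by (intro continuous_intros coord_cont)
  have "closed {g::nat\<Rightarrow>real. (\<Sum>i<n. (g i)^2) = 1}"
    by (intro closed_Collect_eq continuous_intros coord_cont)
  then have K: "compact K" unfolding K_def using compact_cube by blast
  have s1: "(\<Sum>i<n. (if i = 0 then 1 else 0::real)^2) = (\<Sum>i<n. if i = 0 then 1 else 0)"
    by (rule sum.cong) auto
  have "(\<lambda>i. if i = 0 then 1 else 0) \<in> K" using n unfolding K_def
    by (auto simp: s1)
  then have Kne: "K \<noteq> {}" by blast
  obtain g0 where g0: "g0 \<in> K" and gmin: "\<And>g. g \<in> K \<Longrightarrow> F g0 \<le> F g"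
    using continuous_attains_inf[OF K Kne continuous_on_subset[OF Fc]] by blast
  have FL: "F g = (vnorm (LL A t (vec n g)))^2" for g
  proof -
    have d: "dim_vec (LL A t (vec n g)) = n" using A by (simp add: LL_def)
    have e: "LL A t (vec n g) $ r = (\<Sum>c<n. A $$ (r,c) * g c) - t * g r" if r: "r < n" for r
    proof -
      have "(\<Sum>c<n. A $$ (r,c) * vec n g $ c) = (\<Sum>c<n. A $$ (r,c) * g c)"
        by (rule sum.cong) auto
      then show ?thesis using LL_index[OF A r, of "vec n g" t] r by simp
    qed
    show ?thesis unfolding vnorm_sq_sum F_def d by (rule sum.cong) (simp_all add: e)
  qed
  define x0 where "x0 = vec n g0"
  have x0: "x0 \<in> carrier_vec n" unfolding x0_def by simp
  have nx0: "vnorm x0 = 1" using g0 unfolding K_def x0_def vnorm_def by simp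
  show ?thesis
  proof (intro bexI[OF _ x0] conjI nx0 ballI impI)
    fix x assume x: "x \<in> carrier_vec n" and nx: "vnorm x = 1"
    define g where "g = (\<lambda>i. if i < n then x $ i else 0)"
    have xg: "vec n g = x" using x unfolding g_def by (auto simp: vec_eq_iff)
    have "g \<in> K" unfolding K_def
    proof (intro IntI CollectI)
      show "g \<in> Pi UNIV (\<lambda>_. {-1..1})"
        using abs_le_vnorm[of _ x] x nx unfolding g_def by (auto simp: abs_le_iff)
      have "(\<Sum>i<n. (g i)^2) = (vnorm x)^2" unfolding vnorm_sq_sum g_def using x by simp
      then show "(\<Sum>i<n. (g i)^2) = 1" using nx by simp
    qed
    then have "F g0 \<le> F g" by (rule gmin)
    then have "(vnorm (LL A t x0))^2 \<le> (vnorm (LL A t x))^2" unfolding FL x0_def xg .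
    then show "vnorm (LL A t x0) \<le> vnorm (LL A t x)"
      by (rule power2_le_imp_le) simp
  qed
qed

lemma LL_lin: assumes A: "A \<in> carrier_mat n n" and u: "u \<in> carrier_vec n" and v: "v \<in> carrier_vec n"
  shows "LL A t (u + c \<cdot>\<^sub>v v) = LL A t u + c \<cdot>\<^sub>v LL A t v"
proof (rule eq_vecI)
  show "dim_vec (LL A t (u + c \<cdot>\<^sub>v v)) = dim_vec (LL A t u + c \<cdot>\<^sub>v LL A t v)"
    using A u v by (simp add: LL_def)
  fix r assume "r < dim_vec (LL A t u + c \<cdot>\<^sub>v LL A t v)"
  then have r: "r < n" using A u v by (simp add: LL_def)
  have "(\<Sum>x<n. A $$ (r, x) * (u + c \<cdot>\<^sub>v v) $ x) = (\<Sum>x<n. A $$ (r, x) * u $ x) + c * (\<Sum>x<n. A $$ (r, x) * v $ x)"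
    using u v by (simp add: sum.distrib sum_distrib_left algebra_simps)
  moreover have "(LL A t u + c \<cdot>\<^sub>v LL A t v) $ r = LL A t u $ r + c * LL A t v $ r"
  proof -
    have du: "dim_vec (LL A t u) = n" "dim_vec (LL A t v) = n" using A u v by (simp_all add: LL_def)
    show ?thesis using r du by simp
  qed
  ultimately show "LL A t (u + c \<cdot>\<^sub>v v) $ r = (LL A t u + c \<cdot>\<^sub>v LL A t v) $ r"
    using r u v A by (simp add: LL_index algebra_simps)
qed

lemma LL_sym: assumes A: "A \<in> carrier_mat n n" "transpose_mat A = A" and u: "u \<in> carrier_vec n" and w: "w \<in> carrier_vec n"
  shows "LL A t u \<bullet> w = u \<bullet> LL A t w"
proof -
  have "(A *\<^sub>v u) \<bullet> w = u \<bullet> (A *\<^sub>v w)"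
    using transpose_vec_mult_scalar[OF A(1) w u] A(2) by simp
  moreover have "(A *\<^sub>v u - t \<cdot>\<^sub>v u) \<bullet> w = (A *\<^sub>v u) \<bullet> w - t * (u \<bullet> w)"
    using A u w by (subst minus_scalar_prod_distrib[of _ n]) auto
  moreover have "u \<bullet> (A *\<^sub>v w - t \<cdot>\<^sub>v w) = u \<bullet> (A *\<^sub>v w) - t * (u \<bullet> w)"
    using A u w by (subst scalar_prod_minus_distrib[of _ n]) auto
  ultimately show ?thesis unfolding LL_def by simp
qed

lemma expand_sq: assumes u: "u \<in> carrier_vec n" and v: "v \<in> carrier_vec n"
  shows "(vnorm (u + t \<cdot>\<^sub>v v))^2 = u \<bullet> u + 2 * t * (u \<bullet> v) + t^2 * (v \<bullet> v)"
  unfolding vnorm_sq using u v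
  by (simp add: scalar_prod_def sum.distrib sum_distrib_left algebra_simps power2_eq_square)

lemma quad_zero: fixes a b :: real assumes "\<And>t. 0 \<le> 2 * t * a + t^2 * b" shows "a = 0"
proof -
  define t where "t = - a / (\<bar>b\<bar> + 1)"
  have pos: "\<bar>b\<bar> + 1 > 0" by simp
  have "0 \<le> 2 * t * a + t^2 * b" by (rule assms)
  then have "0 \<le> (2 * t * a + t^2 * b) * (\<bar>b\<bar> + 1)^2" by simp
  also have "\<dots> = 2 * a * (\<bar>b\<bar> + 1) * (t * (\<bar>b\<bar> + 1)) + b * (t * (\<bar>b\<bar> + 1))^2"
    by (simp add: algebra_simps power2_eq_square)
  also have "t * (\<bar>b\<bar> + 1) = - a" unfolding t_def using pos by simp
  also have "2 * a * (\<bar>b\<bar> + 1) * (- a) + b * (- a)^2 = a^2 * (b - 2 * (\<bar>b\<bar> + 1))"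
    by (simp add: algebra_simps power2_eq_square)
  finally have "0 \<le> a^2 * (b - 2 * (\<bar>b\<bar> + 1))" .
  moreover have "b - 2 * (\<bar>b\<bar> + 1) < 0" by (simp add: abs_if)
  ultimately have "a^2 \<le> 0" by (simp add: zero_le_mult_iff)
  then show ?thesis by simp
qed

lemma LL_dim: "w \<in> carrier_vec n \<Longrightarrow> dim_vec (LL A t w) = n"
  unfolding LL_def by simp

lemma LL_smult: assumes A: "A \<in> carrier_mat n n" and v: "v \<in> carrier_vec n"
  shows "LL A t (c \<cdot>\<^sub>v v) = c \<cdot>\<^sub>v LL A t v"
proof (rule eq_vecI)
  show "dim_vec (LL A t (c \<cdot>\<^sub>v v)) = dim_vec (c \<cdot>\<^sub>v LL A t v)"
    using v by (simp add: LL_dim)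
  fix r assume "r < dim_vec (c \<cdot>\<^sub>v LL A t v)"
  then have r: "r < n" using v by (simp add: LL_dim)
  have "(\<Sum>x<n. A $$ (r, x) * (c \<cdot>\<^sub>v v) $ x) = c * (\<Sum>x<n. A $$ (r, x) * v $ x)"
    using v by (simp add: sum_distrib_left algebra_simps)
  then show "LL A t (c \<cdot>\<^sub>v v) $ r = (c \<cdot>\<^sub>v LL A t v) $ r"
    using r v A by (simp add: LL_index LL_dim algebra_simps)
qed

lemma LL_eigen: assumes A: "A \<in> carrier_mat n n" and w: "w \<in> carrier_vec n" "w \<noteq> 0\<^sub>v n"
  and L: "LL A t w = s \<cdot>\<^sub>v w"
  shows "eigenvalue A (t + s)"
proof -
  have "A *\<^sub>v w = (t + s) \<cdot>\<^sub>v w"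
  proof (rule eq_vecI)
    show "dim_vec (A *\<^sub>v w) = dim_vec ((t + s) \<cdot>\<^sub>v w)" using A w by simp
    fix r assume "r < dim_vec ((t + s) \<cdot>\<^sub>v w)"
    then have r: "r < n" using w by simp
    have "LL A t w $ r = (A *\<^sub>v w) $ r - t * w $ r" using r A w unfolding LL_def by simp
    then show "(A *\<^sub>v w) $ r = ((t + s) \<cdot>\<^sub>v w) $ r" using L r w by (simp add: algebra_simps)
  qed
  then show ?thesis unfolding eigenvalue_def eigenvector_def using A w by auto
qed

lemma vec_eq_from_diff: fixes a b :: "real vec" assumes "a \<in> carrier_vec n" "b \<in> carrier_vec n" "a - b = 0\<^sub>v n" shows "a = b"
proof (rule eq_vecI)
  show "dim_vec a = dim_vec b" using assms by simp
  fix i assume "i < dim_vec b"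
  then have "(a - b) $ i = 0" using assms by simp
  moreover have "(a - b) $ i = a $ i - b $ i" using \<open>i < dim_vec b\<close> by simp
  ultimately show "a $ i = b $ i" by simp
qed

lemma KL:
  assumes A: "A \<in> carrier_mat n n" "transpose_mat A = A" and z: "z \<in> carrier_vec n" "z \<noteq> 0\<^sub>v n"
  shows "\<exists>lam. eigenvalue A lam \<and> \<bar>lam - t\<bar> * vnorm z \<le> vnorm (A *\<^sub>v z - t \<cdot>\<^sub>v z)"
proof -
  have n: "n > 0"
  proof (rule ccontr)
    assume "\<not> n > 0"
    then have "n = 0" by simp
    then have "z = 0\<^sub>v n" using z(1) by (auto simp: vec_eq_iff)
    then show False using z(2) by simp
  qed
  obtain x0 where x0: "x0 \<in> carrier_vec n" "vnorm x0 = 1"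
    and xmin: "\<And>x. x \<in> carrier_vec n \<Longrightarrow> vnorm x = 1 \<Longrightarrow> vnorm (LL A t x0) \<le> vnorm (LL A t x)"
    using min_exists[OF A(1) n, of t] by blast
  define L where "L = LL A t"
  have Lc: "L w \<in> carrier_vec n" if "w \<in> carrier_vec n" for w using that A unfolding L_def by simp
  define m where "m = (vnorm (L x0))^2"
  have m0: "m \<ge> 0" unfolding m_def by simp
  have hom: "m * (vnorm w)^2 \<le> (vnorm (L w))^2" if w: "w \<in> carrier_vec n" for w
  proof (cases "w = 0\<^sub>v n")
    case True then show ?thesis by simp
  next
    case False
    have c: "vnorm w > 0" using False vnorm_eq_0[OF w] vnorm_nonneg[of w] by linarith
    have y: "(1 / vnorm w) \<cdot>\<^sub>v w \<in> carrier_vec n" using w by simp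
    have ny: "vnorm ((1 / vnorm w) \<cdot>\<^sub>v w) = 1" using c by (simp add: vnorm_smult)
    have "vnorm (L x0) \<le> vnorm (L ((1 / vnorm w) \<cdot>\<^sub>v w))" unfolding L_def by (rule xmin[OF y ny])
    also have "L ((1 / vnorm w) \<cdot>\<^sub>v w) = (1 / vnorm w) \<cdot>\<^sub>v L w" unfolding L_def by (rule LL_smult[OF A(1) w])
    also have "vnorm \<dots> = vnorm (L w) / vnorm w" using c by (simp add: vnorm_smult)
    finally have "vnorm (L x0) * vnorm w \<le> vnorm (L w)" using c by (simp add: pos_le_divide_eq)
    then have "(vnorm (L x0) * vnorm w)^2 \<le> (vnorm (L w))^2"
      by (intro power_mono) simp_all
    then show ?thesis unfolding m_def by (simp add: power_mult_distrib)
  qed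
  have a0: "L x0 \<bullet> L y - m * (x0 \<bullet> y) = 0" if y: "y \<in> carrier_vec n" for y
  proof (rule quad_zero)
    fix s :: real
    have "m * (vnorm (x0 + s \<cdot>\<^sub>v y))^2 \<le> (vnorm (L (x0 + s \<cdot>\<^sub>v y)))^2" using x0 y by (intro hom) simp
    also have "L (x0 + s \<cdot>\<^sub>v y) = L x0 + s \<cdot>\<^sub>v L y" unfolding L_def by (rule LL_lin[OF A(1) x0(1) y])
    finally have "m * (x0 \<bullet> x0 + 2 * s * (x0 \<bullet> y) + s^2 * (y \<bullet> y))
       \<le> L x0 \<bullet> L x0 + 2 * s * (L x0 \<bullet> L y) + s^2 * (L y \<bullet> L y)"
      unfolding expand_sq[OF x0(1) y] expand_sq[OF Lc[OF x0(1)] Lc[OF y]] .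
    moreover have "x0 \<bullet> x0 = 1" using x0(2) vnorm_sq[of x0] by simp
    moreover have "L x0 \<bullet> L x0 = m" unfolding m_def vnorm_sq ..
    ultimately show "0 \<le> 2 * s * (L x0 \<bullet> L y - m * (x0 \<bullet> y)) + s^2 * (L y \<bullet> L y - m * (y \<bullet> y))"
      by (simp add: algebra_simps)
  qed
  define d where "d = L (L x0) - m \<cdot>\<^sub>v x0"
  have LLx: "L (L x0) \<in> carrier_vec n" using Lc x0 by simp
  have d: "d \<in> carrier_vec n" unfolding d_def using LLx x0 by simp
  have "L x0 \<bullet> L d = L (L x0) \<bullet> d" unfolding L_def using LL_sym[OF A Lc[OF x0(1)] d, of t] L_def by simp
  then have e1: "L (L x0) \<bullet> d = m * (x0 \<bullet> d)" using a0[OF d] by simp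
  have "d \<bullet> d = L (L x0) \<bullet> d - (m \<cdot>\<^sub>v x0) \<bullet> d" unfolding d_def
    using LLx x0 d by (subst minus_scalar_prod_distrib[of _ n]) auto
  also have "(m \<cdot>\<^sub>v x0) \<bullet> d = m * (x0 \<bullet> d)" using x0 d by simp
  finally have dd: "d \<bullet> d = 0" using e1 by simp
  have "(vnorm d)^2 = 0" using vnorm_sq[of d] dd by (simp only:)
  then have "vnorm d = 0" by (simp only: power_eq_0_iff zero_neq_numeral simp_thms)
  then have "d = 0\<^sub>v n" using vnorm_eq_0[OF d] by (simp only:)
  then have dz: "L (L x0) - m \<cdot>\<^sub>v x0 = 0\<^sub>v n" unfolding d_def .
  have mx: "m \<cdot>\<^sub>v x0 \<in> carrier_vec n" using x0 by simp
  have LL2: "L (L x0) = m \<cdot>\<^sub>v x0" by (rule vec_eq_from_diff[OF LLx mx dz])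
  define s where "s = sqrt m"
  have s0: "s \<ge> 0" and ss: "s * s = m" unfolding s_def using m0 by simp_all
  define u where "u = L x0 + s \<cdot>\<^sub>v x0"
  have u: "u \<in> carrier_vec n" unfolding u_def using Lc x0 by simp
  have Lu: "L u = s \<cdot>\<^sub>v u"
  proof -
    have "L u = L (L x0) + s \<cdot>\<^sub>v L x0" unfolding u_def L_def by (rule LL_lin[OF A(1) Lc[OF x0(1), unfolded L_def] x0(1)])
    also have "\<dots> = s \<cdot>\<^sub>v u"
    proof (rule eq_vecI)
      show "dim_vec (L (L x0) + s \<cdot>\<^sub>v L x0) = dim_vec (s \<cdot>\<^sub>v u)" using LLx Lc[OF x0(1)] u by simp
      fix i assume "i < dim_vec (s \<cdot>\<^sub>v u)"
      then have i: "i < n" using u by simp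
      show "(L (L x0) + s \<cdot>\<^sub>v L x0) $ i = (s \<cdot>\<^sub>v u) $ i"
        using i LLx Lc[OF x0(1)] x0 u unfolding LL2 u_def by (simp add: algebra_simps ss[symmetric])
    qed
    finally show ?thesis .
  qed
  have x0nz: "x0 \<noteq> 0\<^sub>v n"
  proof
    assume "x0 = 0\<^sub>v n"
    then have "vnorm x0 = 0" using vnorm_eq_0[OF x0(1)] by (simp only:)
    then show False using x0(2) by (simp only: zero_neq_one)
  qed
  obtain lam where lam: "eigenvalue A lam" and ls: "\<bar>lam - t\<bar> = s"
  proof (cases "u = 0\<^sub>v n")
    case True
    have "L x0 = (- s) \<cdot>\<^sub>v x0"
    proof (rule eq_vecI)
      show "dim_vec (L x0) = dim_vec ((- s) \<cdot>\<^sub>v x0)" using Lc[OF x0(1)] x0 by simp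
      fix i assume "i < dim_vec ((- s) \<cdot>\<^sub>v x0)"
      then have i: "i < n" using x0 by simp
      have "u $ i = 0" using True i by simp
      then show "L x0 $ i = ((- s) \<cdot>\<^sub>v x0) $ i" using i Lc[OF x0(1)] x0 unfolding u_def by simp
    qed
    then have "eigenvalue A (t + - s)" using LL_eigen[OF A(1) x0(1) x0nz] unfolding L_def by blast
    then show ?thesis using that[of "t + - s"] s0 by simp
  next
    case False
    have "eigenvalue A (t + s)" using LL_eigen[OF A(1) u False] Lu unfolding L_def by blast
    then show ?thesis using that[of "t + s"] s0 by simp
  qed
  have "(s * vnorm z)^2 = (s * s) * (vnorm z)^2" by (simp add: power2_eq_square algebra_simps)
  then have "(s * vnorm z)^2 \<le> (vnorm (L z))^2"
    using hom[OF z(1)] unfolding ss by simp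
  then have "s * vnorm z \<le> vnorm (L z)" by (rule power2_le_imp_le) simp
  then show ?thesis using lam ls unfolding L_def LL_def by auto
qed

lemma mult_mat_vec_zero': "B \<in> carrier_mat nr nc \<Longrightarrow> B *\<^sub>v 0\<^sub>v nc = 0\<^sub>v nr"
  by (intro eq_vecI) (auto simp: scalar_prod_def)


lemma eig_T:
  fixes S T :: "real mat"
  assumes S: "S \<in> carrier_mat M M" "transpose_mat S * S = 1\<^sub>m M"
    and spec: "T = S * mat M M (\<lambda>(i, j). if i = j then \<theta> i else 0) * transpose_mat S"
    and ev: "eigenvalue T \<mu>"
  shows "\<exists>i<M. \<mu> = \<theta> i"
proof -
  define Th where "Th = mat M M (\<lambda>(i, j). if i = j then (\<theta> i::real) else 0)"
  have Th: "Th \<in> carrier_mat M M" unfolding Th_def by simp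
  have St: "transpose_mat S \<in> carrier_mat M M" using S by simp
  have TT: "T = S * Th * transpose_mat S" unfolding spec Th_def ..
  have T: "T \<in> carrier_mat M M" unfolding TT using S(1) Th St by (meson mult_carrier_mat)
  obtain v where v: "v \<in> carrier_vec M" "v \<noteq> 0\<^sub>v M" and Tv: "T *\<^sub>v v = \<mu> \<cdot>\<^sub>v v"
    using ev T unfolding eigenvalue_def eigenvector_def by auto
  have SSt: "S * transpose_mat S = 1\<^sub>m M" by (rule mat_mult_left_right_inverse[OF St S(1) S(2)])
  define w where "w = transpose_mat S *\<^sub>v v"
  have w: "w \<in> carrier_vec M" unfolding w_def using St v by simp
  have "S *\<^sub>v w = (S * transpose_mat S) *\<^sub>v v" unfolding w_def using S St v by simp
  also have "\<dots> = v" unfolding SSt using v by simp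
  finally have Sw: "S *\<^sub>v w = v" .
  have wnz: "w \<noteq> 0\<^sub>v M"
  proof
    assume "w = 0\<^sub>v M"
    then have "S *\<^sub>v w = 0\<^sub>v M" using S(1) by (simp add: mult_mat_vec_zero')
    then show False using Sw v(2) by (simp only:)
  qed
  have StT: "transpose_mat S * T = Th * transpose_mat S"
  proof -
    have "transpose_mat S * T = transpose_mat S * (S * Th * transpose_mat S)" unfolding spec Th_def ..
    also have "\<dots> = transpose_mat S * (S * (Th * transpose_mat S))"
      by (simp only: assoc_mult_mat[OF S(1) Th St])
    also have "\<dots> = (transpose_mat S * S) * (Th * transpose_mat S)"
      using Th St by (intro assoc_mult_mat[symmetric, OF St S(1), of _ M]) (meson mult_carrier_mat)
    also have "\<dots> = Th * transpose_mat S" unfolding S(2) using Th St by simp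
    finally show ?thesis .
  qed
  have "Th *\<^sub>v w = (Th * transpose_mat S) *\<^sub>v v" unfolding w_def using Th St v by simp
  also have "\<dots> = (transpose_mat S * T) *\<^sub>v v" unfolding StT ..
  also have "\<dots> = transpose_mat S *\<^sub>v (T *\<^sub>v v)" using St T v by simp
  also have "\<dots> = \<mu> \<cdot>\<^sub>v w" unfolding Tv w_def by (rule mult_mat_vec[OF St v(1)])
  finally have Thw: "Th *\<^sub>v w = \<mu> \<cdot>\<^sub>v w" .
  obtain i where i: "i < M" "w $ i \<noteq> 0"
  proof (rule ccontr)
    assume "\<not> thesis"
    then have "\<forall>i<M. w $ i = 0" using that by blast
    then have "w = 0\<^sub>v M" using w by (intro eq_vecI) auto
    then show False using wnz by (simp only:)
  qed
  have "(Th *\<^sub>v w) $ i = \<theta> i * w $ i"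
  proof -
    have "(Th *\<^sub>v w) $ i = (\<Sum>j<M. Th $$ (i,j) * w $ j)" using i w Th
      by (simp add: scalar_prod_def atLeast0LessThan row_def)
    also have "\<dots> = (\<Sum>j<M. if j = i then \<theta> i * w $ i else 0)"
      by (rule sum.cong) (use i in \<open>auto simp: Th_def\<close>)
    also have "\<dots> = \<theta> i * w $ i" using i by simp
    finally show ?thesis .
  qed
  moreover have "(\<mu> \<cdot>\<^sub>v w) $ i = \<mu> * w $ i" using i w by simp
  then have "(Th *\<^sub>v w) $ i = \<mu> * w $ i" by (simp only: Thw)
  ultimately have "\<theta> i * w $ i = \<mu> * w $ i" by linarith
  then have "\<mu> = \<theta> i" using i(2) by simp
  then show ?thesis using i(1) by blast
qed

lemma blk_off_Suc: "blk_off p (Suc k) = blk_off p k + p k"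
  unfolding blk_off_def by simp

lemma blk_off_mono: "k \<le> j \<Longrightarrow> blk_off p k \<le> blk_off p j"
  unfolding blk_off_def by (rule sum_mono2) auto

lemma blk_idx_eq: assumes "blk_off p k \<le> c" "c < blk_off p (Suc k)" shows "blk_idx p c = k"
  unfolding blk_idx_def
proof (rule Least_equality)
  show "c < blk_off p (Suc k)" by fact
  fix j assume j: "c < blk_off p (Suc j)"
  show "k \<le> j"
  proof (rule ccontr)
    assume "\<not> k \<le> j"
    then have "Suc j \<le> k" by simp
    then have "blk_off p (Suc j) \<le> blk_off p k" by (rule blk_off_mono)
    then show False using j assms by simp
  qed
qed

lemma sum_split_add: fixes a b :: nat shows "(\<Sum>c<a+b. g c) = (\<Sum>c<a. g c) + (\<Sum>i<b. g (a+i))"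
  by (induction b) (simp_all add: add.assoc)

lemma sum_blocks: fixes N :: nat shows "(\<Sum>c<blk_off p N. g c) = (\<Sum>k<N. \<Sum>i<p k. g (blk_off p k + i))"
  by (induction N) (simp_all add: blk_off_Suc sum_split_add, simp add: blk_off_def)

lemma L2_set_sum_le: fixes N :: nat shows "L2_set (\<lambda>r. \<Sum>k<N. f k r) A \<le> (\<Sum>k<N. L2_set (f k) A)"
proof (induction N)
  case 0 then show ?case by (simp add: L2_set_def)
next
  case (Suc N)
  have "L2_set (\<lambda>r. \<Sum>k<Suc N. f k r) A = L2_set (\<lambda>r. (\<Sum>k<N. f k r) + f N r) A" by simp
  also have "\<dots> \<le> L2_set (\<lambda>r. \<Sum>k<N. f k r) A + L2_set (f N) A" by (rule L2_set_triangle_ineq)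
  also have "\<dots> \<le> (\<Sum>k<N. L2_set (f k) A) + L2_set (f N) A" using Suc by simp
  finally show ?case by simp
qed

definition subv :: "(nat \<Rightarrow> nat) \<Rightarrow> real vec \<Rightarrow> nat \<Rightarrow> real vec" where
  "subv p s k = vec (p k) (\<lambda>i. s $ (blk_off p k + i))"

lemma blk_concat_mult:
  assumes D: "\<And>j. j < N \<Longrightarrow> D j \<in> carrier_mat n (p j)" and r: "r < n"
    and s: "s \<in> carrier_vec (blk_off p N)"
  shows "(blk_concat n p N D *\<^sub>v s) $ r = (\<Sum>k<N. (D k *\<^sub>v subv p s k) $ r)"
proof -
  have "(blk_concat n p N D *\<^sub>v s) $ r = (\<Sum>c<blk_off p N. blk_concat n p N D $$ (r,c) * s $ c)"
    using r s unfolding blk_concat_def by (simp add: scalar_prod_def atLeast0LessThan row_def)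
  also have "\<dots> = (\<Sum>k<N. \<Sum>i<p k. blk_concat n p N D $$ (r, blk_off p k + i) * s $ (blk_off p k + i))"
    by (rule sum_blocks)
  also have "\<dots> = (\<Sum>k<N. (D k *\<^sub>v subv p s k) $ r)"
  proof (rule sum.cong[OF refl])
    fix k assume k: "k \<in> {..<N}"
    have "(\<Sum>i<p k. blk_concat n p N D $$ (r, blk_off p k + i) * s $ (blk_off p k + i))
        = (\<Sum>i<p k. D k $$ (r, i) * subv p s k $ i)"
    proof (rule sum.cong[OF refl])
      fix i assume i: "i \<in> {..<p k}"
      have lt: "blk_off p k + i < blk_off p (Suc k)" using i by (simp add: blk_off_Suc)
      have "blk_off p (Suc k) \<le> blk_off p N" using k by (intro blk_off_mono) simp
      then have lt2: "blk_off p k + i < blk_off p N" using lt by linarith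
      have idx: "blk_idx p (blk_off p k + i) = k" by (rule blk_idx_eq) (use lt in auto)
      show "blk_concat n p N D $$ (r, blk_off p k + i) * s $ (blk_off p k + i)
          = D k $$ (r, i) * subv p s k $ i"
        using r lt2 idx i unfolding blk_concat_def subv_def by simp
    qed
    also have "\<dots> = (D k *\<^sub>v subv p s k) $ r"
      using D[of k] k r by (simp add: scalar_prod_def atLeast0LessThan row_def subv_def)
    finally show "(\<Sum>i<p k. blk_concat n p N D $$ (r, blk_off p k + i) * s $ (blk_off p k + i))
        = (D k *\<^sub>v subv p s k) $ r" .
  qed
  finally show ?thesis .
qed

lemma blk_concat_bound:
  assumes D: "\<And>j. j < N \<Longrightarrow> D j \<in> carrier_mat n (p j)"
    and Db: "\<And>j. j < N \<Longrightarrow> spec_norm (D j) \<le> c"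
    and s: "s \<in> carrier_vec (blk_off p N)"
  shows "vnorm (blk_concat n p N D *\<^sub>v s) \<le> sqrt (real N) * c * vnorm s"
proof -
  have c0: "c \<ge> 0" if "N > 0" using Db[of 0] spec_norm_nonneg[of "D 0"] that by linarith
  have dimE: "dim_vec (blk_concat n p N D *\<^sub>v s) = n" unfolding blk_concat_def by simp
  have "vnorm (blk_concat n p N D *\<^sub>v s) = L2_set (\<lambda>r. \<Sum>k<N. (D k *\<^sub>v subv p s k) $ r) {..<n}"
    unfolding vnorm_L2 dimE by (rule L2_set_cong) (simp_all add: blk_concat_mult[OF D _ s])
  also have "\<dots> \<le> (\<Sum>k<N. L2_set (\<lambda>r. (D k *\<^sub>v subv p s k) $ r) {..<n})" by (rule L2_set_sum_le)
  also have "\<dots> = (\<Sum>k<N. vnorm (D k *\<^sub>v subv p s k))"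
  proof (rule sum.cong[OF refl])
    fix k assume "k \<in> {..<N}"
    then have "dim_row (D k) = n" using D[of k] by auto
    then show "L2_set (\<lambda>r. (D k *\<^sub>v subv p s k) $ r) {..<n} = vnorm (D k *\<^sub>v subv p s k)"
      by (simp add: vnorm_L2)
  qed
  also have "\<dots> \<le> (\<Sum>k<N. c * vnorm (subv p s k))"
  proof (rule sum_mono)
    fix k assume k: "k \<in> {..<N}"
    have "vnorm (D k *\<^sub>v subv p s k) \<le> spec_norm (D k) * vnorm (subv p s k)"
      by (rule spec_norm_bound) (use D[of k] k in \<open>simp add: subv_def\<close>)
    also have "\<dots> \<le> c * vnorm (subv p s k)" using Db[of k] k by (simp add: mult_right_mono)
    finally show "vnorm (D k *\<^sub>v subv p s k) \<le> c * vnorm (subv p s k)" .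
  qed
  also have "\<dots> = c * (\<Sum>k<N. \<bar>vnorm (subv p s k)\<bar> * \<bar>1\<bar>)" by (simp add: sum_distrib_left)
  also have "\<dots> \<le> c * (L2_set (\<lambda>k. vnorm (subv p s k)) {..<N} * L2_set (\<lambda>k. 1) {..<N})"
  proof (cases "N > 0")
    case True
    show ?thesis by (rule mult_left_mono[OF L2_set_mult_ineq c0[OF True]])
  next
    case False then show ?thesis by simp
  qed
  also have "L2_set (\<lambda>k. 1) {..<N} = sqrt (real N)" by (simp add: L2_set_constant)
  also have "L2_set (\<lambda>k. vnorm (subv p s k)) {..<N} = vnorm s"
  proof -
    have "(\<Sum>k<N. (vnorm (subv p s k))^2) = (\<Sum>k<N. \<Sum>i<p k. (s $ (blk_off p k + i))^2)"
      by (rule sum.cong[OF refl]) (simp add: vnorm_def sum_nonneg subv_def)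
    also have "\<dots> = (\<Sum>c<blk_off p N. (s $ c)^2)" by (rule sum_blocks[symmetric])
    finally show ?thesis unfolding L2_set_def vnorm_def using s by simp
  qed
  finally show ?thesis by (simp add: algebra_simps)
qed

lemma col_norm:
  fixes S :: "real mat"
  assumes S: "S \<in> carrier_mat M M" "transpose_mat S * S = 1\<^sub>m M" and j: "j < M"
  shows "vnorm (col S j) = 1"
proof -
  have "(transpose_mat S * S) $$ (j,j) = row (transpose_mat S) j \<bullet> col S j"
    using S j by (intro index_mult_mat(1)) auto
  also have "row (transpose_mat S) j = col S j" using S j by simp
  finally have "col S j \<bullet> col S j = 1" using S j by simp
  then have "(vnorm (col S j))^2 = 1^2" using vnorm_sq[of "col S j"] by simp
  then show ?thesis by (rule power2_eq_imp_eq) simp_all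
qed

lemma ritz_eig:
  fixes S T :: "real mat"
  assumes S: "S \<in> carrier_mat M M" "transpose_mat S * S = 1\<^sub>m M"
    and spec: "T = S * mat M M (\<lambda>(i, j). if i = j then \<theta> i else 0) * transpose_mat S"
    and j: "j < M"
  shows "T *\<^sub>v col S j = \<theta> j \<cdot>\<^sub>v col S j"
proof -
  define Th where "Th = mat M M (\<lambda>(i, j). if i = j then (\<theta> i::real) else 0)"
  have Th: "Th \<in> carrier_mat M M" unfolding Th_def by simp
  have St: "transpose_mat S \<in> carrier_mat M M" using S by simp
  have TT: "T = S * Th * transpose_mat S" unfolding spec Th_def ..
  have T: "T \<in> carrier_mat M M" unfolding TT using S(1) Th St by (meson mult_carrier_mat)
  have STh: "S * Th \<in> carrier_mat M M" using S(1) Th by (meson mult_carrier_mat)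
  have "T * S = (S * Th) * (transpose_mat S * S)" unfolding TT
    by (rule assoc_mult_mat[OF STh St S(1)])
  also have "\<dots> = S * Th" unfolding S(2) by (rule right_mult_one_mat[OF STh])
  finally have TS: "T * S = S * Th" .
  have "T *\<^sub>v col S j = col (T * S) j" by (rule col_mult2[OF T S(1) j, symmetric])
  also have "\<dots> = col (S * Th) j" unfolding TS ..
  also have "\<dots> = \<theta> j \<cdot>\<^sub>v col S j"
  proof (rule eq_vecI)
    show "dim_vec (col (S * Th) j) = dim_vec (\<theta> j \<cdot>\<^sub>v col S j)" using S Th by simp
    fix r assume "r < dim_vec (\<theta> j \<cdot>\<^sub>v col S j)"
    then have r: "r < M" using S by simp
    have "col (S * Th) j $ r = (S * Th) $$ (r, j)" using r j S Th by simp
    also have "\<dots> = (\<Sum>c<M. S $$ (r,c) * Th $$ (c,j))" using r j S Th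
      by (simp add: scalar_prod_def atLeast0LessThan row_def col_def)
    also have "\<dots> = (\<Sum>c<M. if c = j then S $$ (r,j) * \<theta> j else 0)"
      by (rule sum.cong[OF refl]) (use j in \<open>auto simp: Th_def\<close>)
    also have "\<dots> = S $$ (r,j) * \<theta> j" using j by simp
    also have "\<dots> = (\<theta> j \<cdot>\<^sub>v col S j) $ r" using r j S by simp
    finally show "col (S * Th) j $ r = (\<theta> j \<cdot>\<^sub>v col S j) $ r" .
  qed
  finally show ?thesis .
qed

lemma residual:
  fixes A V T E :: "real mat"
  assumes A: "A \<in> carrier_mat n n" and V: "V \<in> carrier_mat n M" and T: "T \<in> carrier_mat M M"
    and E: "E \<in> carrier_mat n M" and rec: "A * V = V * T + E"
    and s: "s \<in> carrier_vec M" and Ts: "T *\<^sub>v s = th \<cdot>\<^sub>v s"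
  shows "A *\<^sub>v (V *\<^sub>v s) - th \<cdot>\<^sub>v (V *\<^sub>v s) = E *\<^sub>v s"
proof -
  have VT: "V * T \<in> carrier_mat n M" using V T by (meson mult_carrier_mat)
  have "A *\<^sub>v (V *\<^sub>v s) = (A * V) *\<^sub>v s" using A V s by simp
  also have "\<dots> = (V * T) *\<^sub>v s + E *\<^sub>v s" unfolding rec by (rule add_mult_distrib_mat_vec[OF VT E s])
  also have "(V * T) *\<^sub>v s = V *\<^sub>v (T *\<^sub>v s)" using V T s by simp
  also have "\<dots> = th \<cdot>\<^sub>v (V *\<^sub>v s)" unfolding Ts by (rule mult_mat_vec[OF V s])
  finally have e: "A *\<^sub>v (V *\<^sub>v s) = th \<cdot>\<^sub>v (V *\<^sub>v s) + E *\<^sub>v s" .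
  show ?thesis
  proof (rule eq_vecI)
    show "dim_vec (A *\<^sub>v (V *\<^sub>v s) - th \<cdot>\<^sub>v (V *\<^sub>v s)) = dim_vec (E *\<^sub>v s)" using A V E by simp
    fix r assume "r < dim_vec (E *\<^sub>v s)"
    then have r: "r < n" using E by simp
    have "(A *\<^sub>v (V *\<^sub>v s)) $ r = (th \<cdot>\<^sub>v (V *\<^sub>v s)) $ r + (E *\<^sub>v s) $ r"
      unfolding e using r V E by simp
    then show "(A *\<^sub>v (V *\<^sub>v s) - th \<cdot>\<^sub>v (V *\<^sub>v s)) $ r = (E *\<^sub>v s) $ r" using r V A by simp
  qed
qed

theorem theorem2:
  fixes n N :: nat and p :: "nat \<Rightarrow> nat"
    and A V T S E :: "real mat" and D :: "nat \<Rightarrow> real mat"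
    and \<theta> :: "nat \<Rightarrow> real" and \<epsilon>\<^sub>1 \<epsilon>\<^sub>2 :: real
  defines "M \<equiv> blk_off p N"
  assumes A: "A \<in> carrier_mat n n" "transpose_mat A = A"
    and V: "V \<in> carrier_mat n M"
    and T: "T \<in> carrier_mat M M" "transpose_mat T = T" "block_tridiag p N T"
    and D: "\<And>j. j < N \<Longrightarrow> D j \<in> carrier_mat n (p j)"
    and rec: "A * V = V * T + blk_concat n p N D"
    and eps2: "\<epsilon>\<^sub>2 > 0" "\<And>j. j < N \<Longrightarrow> spec_norm (D j) \<le> \<epsilon>\<^sub>2 * spec_norm A"
    and S: "S \<in> carrier_mat M M" "transpose_mat S * S = 1\<^sub>m M"
    and spec: "T = S * mat M M (\<lambda>(i, j). if i = j then \<theta> i else 0) * transpose_mat S"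
    and eps1: "\<epsilon>\<^sub>1 > 0"
    and ritz: "\<And>i. i < M \<Longrightarrow> vnorm (V *\<^sub>v col S i) < 1/2 \<Longrightarrow>
       (\<exists>j < M. vnorm (V *\<^sub>v col S j) \<ge> 1/2 \<and> \<bar>\<theta> i - \<theta> j\<bar> \<le> \<epsilon>\<^sub>1 * spec_norm A)"
  shows "\<forall>\<mu>. eigenvalue T \<mu> \<longrightarrow>
    (\<exists>lam. eigenvalue A lam \<and> \<bar>\<mu> - lam\<bar> \<le> 3 * max (sqrt (real N) * \<epsilon>\<^sub>2) \<epsilon>\<^sub>1 * spec_norm A)"
proof (intro allI impI)
  fix \<mu> assume ev: "eigenvalue T \<mu>"
  obtain i where i: "i < M" and mu: "\<mu> = \<theta> i" using eig_T[OF S spec ev] by blast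
  define nA where "nA = spec_norm A"
  have nA: "nA \<ge> 0" unfolding nA_def by (rule spec_norm_nonneg)
  define K where "K = max (sqrt (real N) * \<epsilon>\<^sub>2) \<epsilon>\<^sub>1"
  have E: "blk_concat n p N D \<in> carrier_mat n M" unfolding blk_concat_def M_def by simp
  have G: "\<exists>lam. eigenvalue A lam \<and> \<bar>\<theta> j - lam\<bar> \<le> 2 * (sqrt (real N) * \<epsilon>\<^sub>2) * nA"
    if j: "j < M" and zj: "vnorm (V *\<^sub>v col S j) \<ge> 1/2" for j
  proof -
    define s where "s = col S j"
    have s: "s \<in> carrier_vec M" unfolding s_def using S(1) by (intro carrier_vecI) auto
    have ns: "vnorm s = 1" unfolding s_def by (rule col_norm[OF S j])
    have Ts: "T *\<^sub>v s = \<theta> j \<cdot>\<^sub>v s" unfolding s_def by (rule ritz_eig[OF S spec j])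
    define z where "z = V *\<^sub>v s"
    have z: "z \<in> carrier_vec n" unfolding z_def using V s by simp
    have znz: "z \<noteq> 0\<^sub>v n"
    proof
      assume "z = 0\<^sub>v n"
      then have "vnorm z = 0" by simp
      then show False using zj unfolding z_def s_def by simp
    qed
    have res: "A *\<^sub>v z - \<theta> j \<cdot>\<^sub>v z = blk_concat n p N D *\<^sub>v s"
      unfolding z_def by (rule residual[OF A(1) V T(1) E rec s Ts])
    have Eb: "vnorm (blk_concat n p N D *\<^sub>v s) \<le> sqrt (real N) * (\<epsilon>\<^sub>2 * nA) * vnorm s"
      unfolding nA_def by (rule blk_concat_bound[OF D eps2(2)]) (use s in \<open>unfold M_def\<close>)
    obtain lam where lam: "eigenvalue A lam" and lb: "\<bar>lam - \<theta> j\<bar> * vnorm z \<le> vnorm (A *\<^sub>v z - \<theta> j \<cdot>\<^sub>v z)"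
      using KL[OF A z znz, of "\<theta> j"] by blast
    have "\<bar>lam - \<theta> j\<bar> * vnorm z \<le> sqrt (real N) * (\<epsilon>\<^sub>2 * nA)"
      using lb Eb unfolding res ns by simp
    moreover have "\<bar>lam - \<theta> j\<bar> * (1/2) \<le> \<bar>lam - \<theta> j\<bar> * vnorm z"
      using zj unfolding z_def s_def by (intro mult_left_mono) simp_all
    ultimately have "\<bar>\<theta> j - lam\<bar> \<le> 2 * (sqrt (real N) * \<epsilon>\<^sub>2) * nA" by (simp add: abs_minus_commute algebra_simps)
    then show ?thesis using lam by blast
  qed
  have K1: "sqrt (real N) * \<epsilon>\<^sub>2 \<le> K" and K2: "\<epsilon>\<^sub>1 \<le> K" unfolding K_def by simp_all
  have "\<exists>lam. eigenvalue A lam \<and> \<bar>\<mu> - lam\<bar> \<le> \<epsilon>\<^sub>1 * nA + 2 * (sqrt (real N) * \<epsilon>\<^sub>2) * nA"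
  proof (cases "vnorm (V *\<^sub>v col S i) \<ge> 1/2")
    case True
    obtain lam where "eigenvalue A lam" "\<bar>\<theta> i - lam\<bar> \<le> 2 * (sqrt (real N) * \<epsilon>\<^sub>2) * nA"
      using G[OF i True] by blast
    moreover have "0 \<le> \<epsilon>\<^sub>1 * nA" using eps1 nA by simp
    ultimately show ?thesis unfolding mu by (intro exI[of _ lam]) auto
  next
    case False
    then obtain j where j: "j < M" "vnorm (V *\<^sub>v col S j) \<ge> 1/2" and tij: "\<bar>\<theta> i - \<theta> j\<bar> \<le> \<epsilon>\<^sub>1 * nA"
      using ritz[OF i] unfolding nA_def by force
    obtain lam where "eigenvalue A lam" "\<bar>\<theta> j - lam\<bar> \<le> 2 * (sqrt (real N) * \<epsilon>\<^sub>2) * nA"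
      using G[OF j] by blast
    then show ?thesis unfolding mu using tij by (intro exI[of _ lam]) auto
  qed
  then obtain lam where lam: "eigenvalue A lam" and b: "\<bar>\<mu> - lam\<bar> \<le> \<epsilon>\<^sub>1 * nA + 2 * (sqrt (real N) * \<epsilon>\<^sub>2) * nA"
    by blast
  have "\<epsilon>\<^sub>1 * nA \<le> K * nA" using K2 nA by (rule mult_right_mono)
  moreover have "(sqrt (real N) * \<epsilon>\<^sub>2) * nA \<le> K * nA" using K1 nA by (rule mult_right_mono)
  ultimately have "\<bar>\<mu> - lam\<bar> \<le> 3 * K * nA" using b by linarith
  then show "\<exists>lam. eigenvalue A lam \<and> \<bar>\<mu> - lam\<bar> \<le> 3 * max (sqrt (real N) * \<epsilon>\<^sub>2) \<epsilon>\<^sub>1 * spec_norm A"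
    using lam unfolding K_def nA_def by blast
qed

end
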